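(* Let $M=\frac32-\sqrt2$. For real $f_1,f_2,y_1,y_2$ put $$\hat A=(1-f_1)(1-y_1)+3(1-f_2)(1-y_2),\quad \hat F_1=\frac{(1-f_1)(1-y_1)}{\hat A},\quad \hat F_2=\frac{(1-f_2)(1-y_2)}{\hat A},$$ and $$\hat\alpha(f_1,f_2,y_1,y_2)=\frac{1}{\frac12-\hat F_1}\left(\frac{(1-\hat F_1)\,y_1(\frac12-y_1)}{1-y_1}+\frac{3\hat F_2\,y_2(\frac12-y_2)}{1-y_2}+12Mf_1\cdot\frac{\hat F_2}{1-f_2}\right).$$ Then for all $f_1,f_2,y_1,y_2\in[0,\frac12]$ such that $\frac1{13}\le f_1\le\frac12$ and $f_1+3f_2=1$, we have $\hat\alpha(f_1,f_2,y_1,y_2)\le\frac{963}{1000}$.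
   Context: In the paper's notation, with $\Phi(x)=\frac{1}{x(\frac12-x)}$, the factor $\frac1{\frac12-\hat F_1}$ is $\Phi(\hat F_1)\hat F_1$ and $y(\frac12-y)=1/\Phi(y)$. Under the hypotheses $0<\hat F_1<\frac12$, so $\hat\alpha$ is well defined. *)

theory Defs
  imports Complex_Main
begin

definition M_const :: real where
  "M_const = 3/2 - sqrt 2"

definition A_hat :: "real \<Rightarrow> real \<Rightarrow> real \<Rightarrow> real \<Rightarrow> real" where
  "A_hat f1 f2 y1 y2 = (1 - f1) * (1 - y1) + 3 * (1 - f2) * (1 - y2)"

definition F1_hat :: "real \<Rightarrow> real \<Rightarrow> real \<Rightarrow> real \<Rightarrow> real" where
  "F1_hat f1 f2 y1 y2 = (1 - f1) * (1 - y1) / A_hat f1 f2 y1 y2"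

definition F2_hat :: "real \<Rightarrow> real \<Rightarrow> real \<Rightarrow> real \<Rightarrow> real" where
  "F2_hat f1 f2 y1 y2 = (1 - f2) * (1 - y2) / A_hat f1 f2 y1 y2"

definition alpha_hat :: "real \<Rightarrow> real \<Rightarrow> real \<Rightarrow> real \<Rightarrow> real" where
  "alpha_hat f1 f2 y1 y2 =
     (let F1 = F1_hat f1 f2 y1 y2; F2 = F2_hat f1 f2 y1 y2 in
      (1 / (1/2 - F1)) *
        ((1 - F1) * y1 * (1/2 - y1) / (1 - y1)
         + 3 * F2 * y2 * (1/2 - y2) / (1 - y2)
         + 12 * M_const * f1 * (F2 / (1 - f2))))"

end

theory Submission imports Defs begin

lemma quartic_cert:
  fixes h a0 a1 a2 a3 a4 hl hr m :: real
  assumes "hl \<le> h" "h \<le> hr" "a4 \<le> 0" "a2 + a3*hl + a4*hl^2 \<ge> m" "a2 + a3*hr + a4*hr^2 \<ge> m"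
    "m > 0" "a1^2 \<le> 4*a0*m"
  shows "a0 + a1*h + h^2*(a2 + a3*h + a4*h^2) \<ge> 0"
proof -
  have Q: "a2 + a3*h + a4*h^2 \<ge> m"
  proof (cases "hl = hr")
    case True then have "h = hl" using assms by auto
    then show ?thesis using assms by simp
  next
    case False
    then have hlt: "hr - hl > 0" using assms by auto
    have id: "(hr-hl)*(a2 + a3*h + a4*h^2) = (hr-h)*(a2 + a3*hl + a4*hl^2) + (h-hl)*(a2 + a3*hr + a4*hr^2) + (hr-hl)*(a4*((h-hl)*(h-hr)))"
      by (simp add: algebra_simps power2_eq_square)
    have "a4*((h-hl)*(h-hr)) \<ge> 0"
      using assms by (simp add: mult_nonpos_nonpos mult_nonneg_nonpos)
    then have "(hr-hl)*(a4*((h-hl)*(h-hr))) \<ge> 0" using hlt by simp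
    moreover have "(hr-h)*(a2 + a3*hl + a4*hl^2) \<ge> (hr-h)*m" using assms by (intro mult_left_mono) auto
    moreover have "(h-hl)*(a2 + a3*hr + a4*hr^2) \<ge> (h-hl)*m" using assms by (intro mult_left_mono) auto
    ultimately have "(hr-hl)*(a2 + a3*h + a4*h^2) \<ge> (hr-hl)*m" unfolding id by (simp add: algebra_simps)
    then show ?thesis using hlt by simp
  qed
  have "h^2*(a2 + a3*h + a4*h^2) \<ge> h^2*m" using Q by (intro mult_left_mono) auto
  moreover have "4*m*(a0 + a1*h + m*h^2) = (2*m*h + a1)^2 + (4*a0*m - a1^2)"
    by (simp add: algebra_simps power2_eq_square)
  then have "4*m*(a0 + a1*h + m*h^2) \<ge> 0" using assms by simp
  then have "a0 + a1*h + m*h^2 \<ge> 0" using assms by (simp add: zero_le_mult_iff)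
  ultimately show ?thesis by (simp add: algebra_simps)
qed

lemma quad_cert:
  fixes p q R u :: real
  assumes "p > 0" "4*p*q - R^2 \<ge> 0"
  shows "p*u^2 - R*u + q \<ge> 0"
proof -
  have "4*p*(p*u^2 - R*u + q) = (2*p*u - R)^2 + (4*p*q - R^2)"
    by (simp add: algebra_simps power2_eq_square)
  then have "4*p*(p*u^2 - R*u + q) \<ge> 0" using assms by simp
  then show ?thesis using assms by (simp add: zero_le_mult_iff)
qed

definition Pf :: "real \<Rightarrow> real \<Rightarrow> real \<Rightarrow> real \<Rightarrow> real" where
  "Pf m f u v = 963/1000*(2+f)*v*u - 963/1000*(1-f)*u^2 - 2*(2+f)*v*((1-u)*(u-1/2))
      - 2*(2+f)*u*((1-v)*(v-1/2)) - 24*m*f*v*u"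

definition Mu :: real where "Mu = 3/2 - 14142135/10^7"

lemma M_le: "M_const \<le> Mu"
proof -
  have "14142135/10^7 \<le> sqrt (2::real)" by (rule real_le_rsqrt) (simp add: power2_eq_square)
  then show ?thesis unfolding M_const_def Mu_def by simp
qed

lemma P_mono: "m \<le> Mu \<Longrightarrow> f \<ge> 0 \<Longrightarrow> v \<ge> 0 \<Longrightarrow> u \<ge> 0 \<Longrightarrow> Pf Mu f u v \<le> Pf m f u v"
  unfolding Pf_def
proof -
  assume a: "m \<le> Mu" "f \<ge> 0" "v \<ge> 0" "u \<ge> 0"
  have "m*(f*v*u) \<le> Mu*(f*v*u)" using a by (intro mult_right_mono) auto
  then show "963/1000*(2+f)*v*u - 963/1000*(1-f)*u^2 - 2*(2+f)*v*((1-u)*(u-1/2))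
      - 2*(2+f)*u*((1-v)*(v-1/2)) - 24*Mu*f*v*u \<le> 963/1000*(2+f)*v*u - 963/1000*(1-f)*u^2 - 2*(2+f)*v*((1-u)*(u-1/2))
      - 2*(2+f)*u*((1-v)*(v-1/2)) - 24*m*f*v*u" by (simp add: algebra_simps)
qed

lemma P_half:
  assumes "1/2 \<le> u" "u \<le> 1" "1/2 \<le> v" "v \<le> 1"
  shows "Pf Mu (1/2) u v \<ge> 0"
proof -
  define p where "p = 5*v - 963/2000"
  define q where "q = 5/2*v"
  define R where "R = -5/2 + 6810969/500000*v - 5*v^2"
  define h where "h = v - 13/20"
  have e1: "Pf Mu (1/2) u v = p*u^2 - R*u + q"
    unfolding Pf_def p_def q_def R_def Mu_def by (simp add: field_simps power2_eq_square)
  have e2: "4*p*q - R^2 = 272464745591/100000000000000 + (-585247971493/2500000000000)*h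
     + h^2*(10423899031039/250000000000 + 3560969/50000*h + (-25)*h^2)"
    unfolding p_def q_def R_def h_def by (simp add: field_simps power2_eq_square power3_eq_cube power4_eq_xxxx)
  have "4*p*q - R^2 \<ge> 0" unfolding e2
    by (rule quartic_cert[where hl="-3/20" and hr="7/20" and m=30]) (use assms in \<open>auto simp: h_def power2_eq_square\<close>)
  moreover have "p > 0" using assms p_def by simp
  ultimately show ?thesis unfolding e1 by (rule quad_cert[rotated])
qed


lemma P_13:
  assumes "1/2 \<le> u" "u \<le> 1" "1/2 \<le> v" "v \<le> 1"
  shows "Pf Mu (1/13) u v \<ge> 0"
proof -
  define p where "p = 54/13*v - 2889/3250"
  define q where "q = 27/13*v"
  define R where "R = -27/13 + 34514469/3250000*v - 54/13*v^2"
  define h where "h = v - 11/20"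
  have e1: "Pf Mu (1/13) u v = p*u^2 - R*u + q"
    unfolding Pf_def p_def q_def R_def Mu_def by (simp add: field_simps power2_eq_square)
  have e2: "4*p*q - R^2 = 380003915062719/4225000000000000 + (24473057853429/105625000000000)*h
     + h^2*(197837273598039/10562500000000 + 530940663/10562500*h + (-2916/169)*h^2)"
    unfolding p_def q_def R_def h_def by (simp add: field_simps power2_eq_square power3_eq_cube power4_eq_xxxx)
  have "4*p*q - R^2 \<ge> 0" unfolding e2
    by (rule quartic_cert[where hl="-1/20" and hr="9/20" and m=15]) (use assms in \<open>auto simp: h_def power2_eq_square\<close>)
  moreover have "p > 0" using assms p_def by simp
  ultimately show ?thesis unfolding e1 by (rule quad_cert[rotated])
qed

lemma P_all:
  assumes "1/2 \<le> u" "u \<le> 1" "1/2 \<le> v" "v \<le> 1" "1/13 \<le> f" "f \<le> 1/2"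
  shows "Pf M_const f u v \<ge> 0"
proof -
  have lin: "Pf Mu f u v = ((1/2-f)*Pf Mu (1/13) u v + (f-1/13)*Pf Mu (1/2) u v)*(26/11)"
    unfolding Pf_def by (simp add: field_simps power2_eq_square)
  have "(1/2-f)*Pf Mu (1/13) u v \<ge> 0" using P_13[OF assms(1-4)] assms by simp
  moreover have "(f-1/13)*Pf Mu (1/2) u v \<ge> 0" using P_half[OF assms(1-4)] assms by simp
  ultimately have "Pf Mu f u v \<ge> 0" unfolding lin by simp
  also have "Pf Mu f u v \<le> Pf M_const f u v" using M_le assms by (intro P_mono) auto
  finally show ?thesis .
qed

theorem lemma20:
  fixes f1 f2 y1 y2 :: real
  assumes "f1 \<in> {0..1/2}" and "f2 \<in> {0..1/2}" and "y1 \<in> {0..1/2}" and "y2 \<in> {0..1/2}"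
    and "1/13 \<le> f1" and "f1 \<le> 1/2"
    and "f1 + 3 * f2 = 1"
  shows "alpha_hat f1 f2 y1 y2 \<le> 963/1000"
proof -
  define u where "u = 1 - y1"
  define v where "v = 1 - y2"
  have f2: "f2 = (1 - f1)/3" using assms by simp
  have u: "1/2 \<le> u" "u \<le> 1" and v: "1/2 \<le> v" "v \<le> 1" using assms u_def v_def by auto
  have y1: "y1 = 1 - u" and y2: "y2 = 1 - v" using u_def v_def by auto
  have pos: "(2+f1)*v - (1-f1)*u > 0"
  proof -
    have "(2+f1)*v \<ge> (2+f1)*(1/2)" using v assms by (intro mult_left_mono) auto
    moreover have "(1-f1)*u \<le> (1-f1)*1" using u assms by (intro mult_left_mono) auto
    ultimately show ?thesis using assms by (simp add: algebra_simps)
  qed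
  have "(1-f1)*u \<ge> 0" using u assms by simp
  then have Apos: "(1-f1)*u + (2+f1)*v > 0" using pos by linarith
  define Ap where "Ap = (1-f1)*u + (2+f1)*v"
  define Dn where "Dn = (2+f1)*v - (1-f1)*u"
  have Ap0: "Ap > 0" and Dn0: "Dn > 0" using Apos pos Ap_def Dn_def by auto
  have hA: "A_hat f1 f2 y1 y2 = Ap" unfolding A_hat_def Ap_def f2 y1 y2 by (simp add: field_simps)
  have hF1: "F1_hat f1 f2 y1 y2 = (1-f1)*u/Ap" unfolding F1_hat_def hA u_def by simp
  have hF2: "F2_hat f1 f2 y1 y2 = (2+f1)*v/(3*Ap)" unfolding F2_hat_def hA unfolding f2 v_def by (simp add: field_simps)
  have h1: "1/2 - (1-f1)*u/Ap = Dn/(2*Ap)" using Ap0 unfolding Dn_def Ap_def by (simp add: field_simps)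
  have h2: "1 - (1-f1)*u/Ap = (2+f1)*v/Ap" using Ap0 unfolding Ap_def by (simp add: field_simps)
  have h3: "12 * M_const * f1 * ((2+f1)*v/(3*Ap) / (1 - f2)) = 12 * M_const * f1 * v / Ap"
  proof -
    have e: "1 - f2 = (2+f1)/3" using f2 by simp
    have "2 + f1 > 0" using assms by simp
    then have "Ap*(2+f1) > 0" using Ap0 by simp
    then have "Ap * 6 + Ap * (f1 * 3) > 0" "Ap*(2+f1) > 0" by (simp_all add: algebra_simps)
    then show ?thesis unfolding e using Ap0 by (simp add: field_simps)
  qed
  have h4: "3 * ((2+f1)*v/(3*Ap)) * y2 * (1/2 - y2) / (1 - y2) = (2+f1)*(y2*(1/2-y2))/Ap"
    using Ap0 v unfolding y2 by (simp add: field_simps)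
  have h5: "(2+f1)*v/Ap * y1 * (1/2 - y1) / (1 - y1) = (2+f1)*v*(y1*(1/2-y1))/(u*Ap)"
    using Ap0 u unfolding y1 by (simp add: field_simps)
  have aeq: "alpha_hat f1 f2 y1 y2 = (1/(Dn/(2*Ap))) * ((2+f1)*v*(y1*(1/2-y1))/(u*Ap) + (2+f1)*(y2*(1/2-y2))/Ap + 12 * M_const * f1 * v / Ap)"
    unfolding alpha_hat_def Let_def hF1 hF2 h1 h2 h5 h4 h3 ..
  have eqa: "alpha_hat f1 f2 y1 y2 * (Dn*u) = 2*((2+f1)*v*(y1*(1/2-y1)) + u*((2+f1)*(y2*(1/2-y2))) + u*(12 * M_const * f1 * v))"
    unfolding aeq using Ap0 Dn0 u by (simp add: field_simps)
  have eqb: "2*((2+f1)*v*(y1*(1/2-y1)) + u*((2+f1)*(y2*(1/2-y2))) + u*(12 * M_const * f1 * v)) = 963/1000*(Dn*u) - Pf M_const f1 u v"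
    unfolding Pf_def y1 y2 Dn_def by (simp add: field_simps power2_eq_square)
  note eq = trans[OF eqa eqb]
  have "alpha_hat f1 f2 y1 y2 * (Dn*u) \<le> 963/1000*(Dn*u)"
    unfolding eq using P_all[OF u v assms(5,6)] by simp
  moreover have "Dn*u > 0" using Dn0 u by simp
  ultimately show ?thesis using mult_le_cancel_right_pos by blast
qed

end
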